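(* Fix $x\in\mathcal{X}$ and let $\rho=\operatorname{cor}\big(Y(0),Y(1)\mid X=x\big)\in[-1,1]$. Assume that $\big(Y(1),Y(0)\big)\mid X=x$ is (bivariate) Gaussian, that $\hat\mu_t(x)=\mu_t(x)$ for $t=0,1$, and that the nonnegative numbers $l_t(x),u_t(x)$ satisfy, for $t=0,1$, \[ \mathbb{P}\big(Y(t)\le \hat\mu_t(x)+u_t(x)\mid X=x\big)=0.95,\qquad \mathbb{P}\big(Y(t)\ge \hat\mu_t(x)-l_t(x)\mid X=x\big)=0.95 . \] Let $\hat\tau(x)=\hat\mu_1(x)-\hat\mu_0(x)$ and define the $CW(\rho)$ interval \[ C_{ITE}(x)=\Big[\hat\tau(x)-D_\rho\big(l_1(x),u_0(x)\big),\ \hat\tau(x)+D_\rho\big(l_0(x),u_1(x)\big)\Big]. \] Then $C_{ITE}$ is optimal in the sense that it is the smallest set satisfying \[ \mathbb{P}\big(Y(1)-Y(0)\in C_{ITE}(X)\mid X=x\big)=0.9 . \]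
   Context: Potential outcomes framework: $(Y(1),Y(0),T,X)$ is a random vector with covariates $X\in\mathcal{X}\subseteq\mathbb{R}^d$ and potential outcomes $Y(1),Y(0)\in\mathbb{R}$. Write $\mu_t(x)=\mathbb{E}[Y(t)\mid X=x]$, $t=0,1$; $\hat\mu_t$ denotes an estimate of $\mu_t$. For $\rho\in[-1,1]$ and $a,b\ge 0$, the correlation-adjusted Euclidean distance is $D_\rho(a,b)=\sqrt{a^2+b^2-2\rho ab}$. *)

theory Defs
  imports "HOL-Probability.Probability"
begin

definition D_rho :: "real \<Rightarrow> real \<Rightarrow> real \<Rightarrow> real" where
  "D_rho \<rho> a b = sqrt (a\<^sup>2 + b\<^sup>2 - 2 * \<rho> * a * b)"

definition gaussian_rv :: "'a measure \<Rightarrow> ('a \<Rightarrow> real) \<Rightarrow> bool" where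
  "gaussian_rv M Z \<longleftrightarrow> Z \<in> borel_measurable M \<and>
     (\<exists>\<mu> \<sigma>. (\<sigma> > 0 \<and> distributed M lborel Z (normal_density \<mu> \<sigma>))
           \<or> distr M borel Z = return borel \<mu>)"

definition jointly_gaussian :: "'a measure \<Rightarrow> ('a \<Rightarrow> real) \<Rightarrow> ('a \<Rightarrow> real) \<Rightarrow> bool" where
  "jointly_gaussian M X Y \<longleftrightarrow> (\<forall>a b. gaussian_rv M (\<lambda>\<omega>. a * X \<omega> + b * Y \<omega>))"

definition variance_of :: "'a measure \<Rightarrow> ('a \<Rightarrow> real) \<Rightarrow> real" where
  "variance_of M X = (LINT \<omega>|M. (X \<omega> - (LINT \<omega>'|M. X \<omega>'))\<^sup>2)"

definition covariance_of :: "'a measure \<Rightarrow> ('a \<Rightarrow> real) \<Rightarrow> ('a \<Rightarrow> real) \<Rightarrow> real" where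
  "covariance_of M X Y =
     (LINT \<omega>|M. (X \<omega> - (LINT \<omega>'|M. X \<omega>')) * (Y \<omega> - (LINT \<omega>'|M. Y \<omega>')))"

definition correlation_of :: "'a measure \<Rightarrow> ('a \<Rightarrow> real) \<Rightarrow> ('a \<Rightarrow> real) \<Rightarrow> real" where
  "correlation_of M X Y =
     covariance_of M X Y / (sqrt (variance_of M X) * sqrt (variance_of M Y))"

definition C_ITE :: "real \<Rightarrow> real \<Rightarrow> real \<Rightarrow> real \<Rightarrow> real \<Rightarrow> real \<Rightarrow> real \<Rightarrow> real set" where
  "C_ITE \<rho> mu1hat mu0hat l0 u0 l1 u1 =
     {(mu1hat - mu0hat) - D_rho \<rho> l1 u0 .. (mu1hat - mu0hat) + D_rho \<rho> l0 u1}"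

end

theory Submission
  imports Defs
begin

lemma nn_pos:
  fixes g :: "real \<Rightarrow> real"
  assumes g: "g \<in> borel_measurable borel" and A: "A \<in> sets borel"
    and gp: "\<And>x. x \<in> A \<Longrightarrow> g x > 0" and nz: "emeasure lborel A \<noteq> 0"
  shows "(\<integral>\<^sup>+x. ennreal (g x) * indicator A x \<partial>lborel) \<noteq> 0"
proof
  assume "(\<integral>\<^sup>+x. ennreal (g x) * indicator A x \<partial>lborel) = 0"
  then have "AE x in lborel. ennreal (g x) * indicator A x = 0"
    using nn_integral_0_iff_AE[of "\<lambda>x. ennreal (g x) * indicator A x" lborel] g A by simp
  then have "AE x in lborel. x \<notin> A"
  proof (eventually_elim)
    case (elim x)
    show ?case
    proof
      assume xA: "x \<in> A"
      with elim gp[OF xA] show False by (simp add: ennreal_eq_0_iff)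
    qed
  qed
  then have "emeasure lborel A = 0"
    using AE_iff_measurable[of A lborel "\<lambda>x. x \<notin> A"] A by auto
  with nz show False by simp
qed

lemma opt_lemma:
  fixes \<tau> \<sigma> z :: real and B :: "real set"
  defines "f \<equiv> normal_density \<tau> \<sigma>"
  defines "C \<equiv> {\<tau> - z * \<sigma> .. \<tau> + z * \<sigma>}"
  defines "Nf \<equiv> density lborel f"
  assumes sp: "\<sigma> > 0" and z: "z \<ge> 0" and B: "B \<in> sets borel"
    and eq: "measure Nf B = measure Nf C"
  shows "emeasure lborel C \<le> emeasure lborel B \<and>
     (emeasure lborel B = emeasure lborel C \<longrightarrow> emeasure lborel ((B - C) \<union> (C - B)) = 0)"
proof -
  define c where "c = f (\<tau> + z * \<sigma>)"
  define K where "K = 1 / sqrt (2 * pi * \<sigma>\<^sup>2)"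
  have Kpos: "K > 0" unfolding K_def using sp by simp
  have fx: "f x = K * exp (-(x - \<tau>)\<^sup>2 / (2 * \<sigma>\<^sup>2))" for x
    unfolding f_def K_def normal_density_def by simp
  have fnn: "0 \<le> f x" for x unfolding f_def by simp
  have cpos: "c > 0" unfolding c_def f_def using sp normal_density_pos by blast
  have inC: "c \<le> f x" if "x \<in> C" for x
  proof -
    have "\<bar>x - \<tau>\<bar> \<le> z * \<sigma>" using that unfolding C_def by auto
    then have "(x - \<tau>)\<^sup>2 \<le> (z * \<sigma>)\<^sup>2"
      by (metis abs_ge_zero power2_abs power_mono)
    then have "-(z * \<sigma>)\<^sup>2 / (2 * \<sigma>\<^sup>2) \<le> -(x - \<tau>)\<^sup>2 / (2 * \<sigma>\<^sup>2)"
      using sp by (simp add: divide_right_mono)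
    then show ?thesis unfolding c_def fx using Kpos by simp
  qed
  have outC: "f x < c" if "x \<notin> C" for x
  proof -
    have "\<bar>x - \<tau>\<bar> > z * \<sigma>" using that unfolding C_def by auto
    then have "(z * \<sigma>)\<^sup>2 < \<bar>x - \<tau>\<bar>\<^sup>2"
      by (intro power_strict_mono) (use z sp in auto)
    then have "(x - \<tau>)\<^sup>2 > (z * \<sigma>)\<^sup>2" by simp
    then have "-(z * \<sigma>)\<^sup>2 / (2 * \<sigma>\<^sup>2) > -(x - \<tau>)\<^sup>2 / (2 * \<sigma>\<^sup>2)"
      using sp by (simp add: divide_strict_right_mono)
    then show ?thesis unfolding c_def fx using Kpos by simp
  qed
  have fm[measurable]: "f \<in> borel_measurable borel" unfolding f_def by simp
  have Cs[measurable]: "C \<in> sets borel" unfolding C_def by simp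
  note B[measurable]
  interpret Nf: prob_space Nf unfolding Nf_def f_def by (rule prob_space_normal_density[OF sp])
  have sNf: "sets Nf = sets borel" unfolding Nf_def by simp
  have E: "emeasure Nf A = (\<integral>\<^sup>+x. ennreal (f x) * indicator A x \<partial>lborel)" if "A \<in> sets borel" for A
    unfolding Nf_def using that by (simp add: emeasure_density)
  have i1: "emeasure Nf (B - C) \<le> ennreal c * emeasure lborel (B - C)"
  proof -
    have "emeasure Nf (B - C) \<le> (\<integral>\<^sup>+x. ennreal c * indicator (B - C) x \<partial>lborel)"
      unfolding E[OF sets.Diff[OF B Cs]]
      by (intro nn_integral_mono) (auto simp: indicator_def intro!: ennreal_leI less_imp_le[OF outC])
    also have "\<dots> = ennreal c * emeasure lborel (B - C)"
      by (rule nn_integral_cmult_indicator) simp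
    finally show ?thesis .
  qed
  have i2: "ennreal c * emeasure lborel (C - B) \<le> emeasure Nf (C - B)"
  proof -
    have "ennreal c * emeasure lborel (C - B) = (\<integral>\<^sup>+x. ennreal c * indicator (C - B) x \<partial>lborel)"
      by (rule nn_integral_cmult_indicator[symmetric]) simp
    also have "\<dots> \<le> emeasure Nf (C - B)"
      unfolding E[OF sets.Diff[OF Cs B]]
      by (intro nn_integral_mono) (auto simp: indicator_def intro!: ennreal_leI inC)
    finally show ?thesis .
  qed
  have eBC: "emeasure Nf B = emeasure Nf C"
    using eq by (simp add: Nf.emeasure_eq_measure)
  have i3: "emeasure Nf (B - C) = emeasure Nf (C - B)"
  proof -
    have "emeasure Nf (B - C) = emeasure Nf (B - B \<inter> C)" by (simp add: Diff_Int)
    also have "\<dots> = emeasure Nf B - emeasure Nf (B \<inter> C)"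
      by (rule emeasure_Diff) (auto simp: sNf)
    also have "\<dots> = emeasure Nf C - emeasure Nf (C \<inter> B)" using eBC by (simp add: Int_commute)
    also have "\<dots> = emeasure Nf (C - C \<inter> B)"
      by (rule emeasure_Diff[symmetric]) (auto simp: sNf)
    also have "\<dots> = emeasure Nf (C - B)" by (simp add: Diff_Int)
    finally show ?thesis .
  qed
  have le1: "emeasure lborel (C - B) \<le> emeasure lborel (B - C)"
  proof -
    have "ennreal c * emeasure lborel (C - B) \<le> ennreal c * emeasure lborel (B - C)"
      using i1 i2 i3 by (metis order_trans)
    then show ?thesis using cpos by (subst (asm) ennreal_mult_le_mult_iff) auto
  qed
  have dC: "emeasure lborel C = emeasure lborel (C \<inter> B) + emeasure lborel (C - B)"
  proof -
    have d: "C \<inter> B \<inter> (C - B) = {}" by blast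
    have "emeasure lborel (C \<inter> B) + emeasure lborel (C - B) = emeasure lborel (C \<inter> B \<union> (C - B))"
      by (rule plus_emeasure[OF _ _ d]) auto
    then show ?thesis by (simp add: Int_Diff_Un)
  qed
  have dB: "emeasure lborel B = emeasure lborel (C \<inter> B) + emeasure lborel (B - C)"
  proof -
    have d: "C \<inter> B \<inter> (B - C) = {}" by blast
    have "emeasure lborel (C \<inter> B) + emeasure lborel (B - C) = emeasure lborel (C \<inter> B \<union> (B - C))"
      by (rule plus_emeasure[OF _ _ d]) auto
    moreover have "C \<inter> B \<union> (B - C) = B" by blast
    ultimately show ?thesis by simp
  qed
  have part1: "emeasure lborel C \<le> emeasure lborel B"
    unfolding dC dB using le1 by (rule add_left_mono)
  have part2: "emeasure lborel ((B - C) \<union> (C - B)) = 0" if eqm: "emeasure lborel B = emeasure lborel C"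
  proof -
    have Cfin: "emeasure lborel C \<noteq> \<infinity>" unfolding C_def emeasure_lborel_Icc_eq by simp
    have CBfin: "emeasure lborel (C \<inter> B) \<noteq> \<infinity>"
      using emeasure_mono[of "C \<inter> B" C lborel] Cfin by (auto simp: top_unique)
    have eqd: "emeasure lborel (B - C) = emeasure lborel (C - B)"
      using dB dC eqm CBfin by (metis ennreal_add_left_cancel)
    have z1: "emeasure lborel (B - C) = 0"
    proof (rule ccontr)
      assume nz: "emeasure lborel (B - C) \<noteq> 0"
      define P where "P = (\<integral>\<^sup>+x. ennreal (c - f x) * indicator (B - C) x \<partial>lborel)"
      have Pnz: "P \<noteq> 0" unfolding P_def
        by (rule nn_pos) (use nz outC in auto)
      have "ennreal c * emeasure lborel (B - C) = (\<integral>\<^sup>+x. ennreal c * indicator (B - C) x \<partial>lborel)"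
        by (rule nn_integral_cmult_indicator[symmetric]) simp
      also have "\<dots> = (\<integral>\<^sup>+x. ennreal (f x) * indicator (B - C) x + ennreal (c - f x) * indicator (B - C) x \<partial>lborel)"
      proof (intro nn_integral_cong)
        fix x
        show "ennreal c * indicator (B - C) x = ennreal (f x) * indicator (B - C) x + ennreal (c - f x) * indicator (B - C) x"
          using outC[of x] fnn[of x] by (auto simp: indicator_def ennreal_plus[symmetric] simp del: ennreal_plus)
      qed
      also have "\<dots> = emeasure Nf (B - C) + P"
        unfolding P_def E[OF sets.Diff[OF B Cs]] by (rule nn_integral_add) auto
      finally have "emeasure Nf (B - C) + P = ennreal c * emeasure lborel (B - C)" by simp
      also have "\<dots> \<le> emeasure Nf (B - C)" using i2 i3 eqd by simp
      finally have "emeasure Nf (B - C) + P \<le> emeasure Nf (B - C) + 0" by simp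
      then have "P \<le> 0" by (subst (asm) ennreal_add_left_cancel_le) (auto simp: Nf.emeasure_eq_measure)
      with Pnz show False by simp
    qed
    have "emeasure lborel ((B - C) \<union> (C - B)) \<le> emeasure lborel (B - C) + emeasure lborel (C - B)"
      by (rule emeasure_subadditive) auto
    then show ?thesis using z1 eqd by simp
  qed
  show ?thesis using part1 part2 by blast
qed


lemma meas_dist:
  assumes D: "distributed M lborel X g" and A: "A \<in> sets borel"
  shows "measure M {\<omega> \<in> space M. X \<omega> \<in> A} = measure (density lborel g) A"
proof -
  have "{\<omega> \<in> space M. X \<omega> \<in> A} = X -` A \<inter> space M" by auto
  then have "measure M {\<omega> \<in> space M. X \<omega> \<in> A} = measure (distr M lborel X) A"
    using measure_distr[OF distributed_measurable[OF D], of A] A by simp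
  also have "\<dots> = measure (density lborel g) A"
    by (simp add: distributed_distr_eq_density[OF D])
  finally show ?thesis .
qed

definition Phi :: "real \<Rightarrow> real" where
  "Phi t = measure (density lborel std_normal_density) {..t}"

lemma Phi_strict: assumes "a < b" shows "Phi a < Phi b"
proof -
  let ?N = "density lborel std_normal_density"
  interpret N: prob_space ?N by (rule prob_space_normal_density) simp
  have "{..b} = {..a} \<union> {a<..b}" using assms by auto
  moreover have "measure ?N ({..a} \<union> {a<..b}) = measure ?N {..a} + measure ?N {a<..b}"
    by (rule N.finite_measure_Union) auto
  ultimately have "Phi b = Phi a + measure ?N {a<..b}"
    unfolding Phi_def by simp
  moreover have "emeasure ?N {a<..b} \<noteq> 0"
    by (simp add: emeasure_density) (rule nn_pos, use assms normal_density_pos in auto)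
  then have "measure ?N {a<..b} > 0"
    by (simp add: N.emeasure_eq_measure zero_less_measure_iff)
  ultimately show ?thesis by simp
qed

lemma Phi_inj: "Phi a = Phi b \<Longrightarrow> a = b"
  using Phi_strict[of a b] Phi_strict[of b a] by (cases a b rule: linorder_cases) auto

lemma std_both:
  assumes P: "prob_space M" and s: "\<sigma> > 0" and D: "distributed M lborel X (normal_density \<mu> \<sigma>)"
  shows "measure M {\<omega> \<in> space M. X \<omega> \<le> \<mu> + \<sigma> * t} = Phi t"
    and "measure M {\<omega> \<in> space M. X \<omega> \<ge> \<mu> - \<sigma> * t} = Phi t"
proof -
  interpret prob_space M by (rule P)
  have W: "distributed M lborel (\<lambda>x. (X x - \<mu>) / \<sigma>) std_normal_density"
    using normal_standard_normal_convert[OF s] D by simp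
  have "distributed M lborel (\<lambda>x. 2 * \<mu> + (-1) * X x) (normal_density (2 * \<mu> + (-1) * \<mu>) (\<bar>-1\<bar> * \<sigma>))"
    by (rule normal_density_affine[OF D s]) simp
  then have "distributed M lborel (\<lambda>x. 2 * \<mu> - X x) (normal_density \<mu> \<sigma>)" by simp
  then have W': "distributed M lborel (\<lambda>x. (2 * \<mu> - X x - \<mu>) / \<sigma>) std_normal_density"
    using normal_standard_normal_convert[OF s] by simp
  have "{\<omega> \<in> space M. X \<omega> \<le> \<mu> + \<sigma> * t} = {\<omega> \<in> space M. (X \<omega> - \<mu>) / \<sigma> \<in> {..t}}"
    using s by (auto simp: pos_divide_le_eq mult.commute)
  then show "measure M {\<omega> \<in> space M. X \<omega> \<le> \<mu> + \<sigma> * t} = Phi t"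
    using meas_dist[OF W, of "{..t}"] by (simp add: Phi_def)
  have "{\<omega> \<in> space M. X \<omega> \<ge> \<mu> - \<sigma> * t} = {\<omega> \<in> space M. (2 * \<mu> - X \<omega> - \<mu>) / \<sigma> \<in> {..t}}"
    using s by (auto simp: pos_divide_le_eq mult.commute)
  then show "measure M {\<omega> \<in> space M. X \<omega> \<ge> \<mu> - \<sigma> * t} = Phi t"
    using meas_dist[OF W', of "{..t}"] by (simp add: Phi_def)
qed

lemma nondeg:
  assumes P: "prob_space M" and G: "gaussian_rv M Z" and A: "A \<in> sets borel"
    and m: "measure M {\<omega> \<in> space M. Z \<omega> \<in> A} = 0.95"
  shows "\<exists>\<mu> \<sigma>. \<sigma> > 0 \<and> distributed M lborel Z (normal_density \<mu> \<sigma>)"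
proof (rule ccontr)
  assume n: "\<not> ?thesis"
  from G n obtain \<mu> where r: "distr M borel Z = return borel \<mu>" and Zm: "Z \<in> borel_measurable M"
    unfolding gaussian_rv_def by auto
  have "{\<omega> \<in> space M. Z \<omega> \<in> A} = Z -` A \<inter> space M" by auto
  then have "measure M {\<omega> \<in> space M. Z \<omega> \<in> A} = measure (distr M borel Z) A"
    using measure_distr[OF Zm, of A] A by simp
  also have "\<dots> = indicator A \<mu>" unfolding r using A by (simp add: measure_return)
  finally show False using m by (cases "\<mu> \<in> A") auto
qed

lemma nondeg_var:
  assumes P: "prob_space M" and G: "gaussian_rv M Z"
    and v: "variance_of M Z > 0"
  shows "\<exists>\<mu> \<sigma>. \<sigma> > 0 \<and> distributed M lborel Z (normal_density \<mu> \<sigma>)"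
proof (rule ccontr)
  assume n: "\<not> ?thesis"
  from G n obtain \<mu> where r: "distr M borel Z = return borel \<mu>" and Zm: "Z \<in> borel_measurable M"
    unfolding gaussian_rv_def by auto
  have E: "(LINT \<omega>|M. Z \<omega>) = \<mu>"
  proof -
    have "(LINT \<omega>|M. Z \<omega>) = (LINT x|distr M borel Z. x)"
      by (rule integral_distr[symmetric]) (use Zm in auto)
    also have "\<dots> = \<mu>" unfolding r by (simp add: integral_return)
    finally show ?thesis .
  qed
  have "variance_of M Z = (LINT x|distr M borel Z. (x - \<mu>)\<^sup>2)"
    unfolding variance_of_def E by (rule integral_distr[symmetric]) (use Zm in auto)
  also have "\<dots> = 0" unfolding r by (simp add: integral_return)
  finally show False using v by simp
qed

lemma normal_integrable:
  assumes s: "\<sigma> > 0" and D: "distributed M lborel X (normal_density \<mu> \<sigma>)"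
  shows "integrable M (\<lambda>\<omega>. (X \<omega> - \<mu>) ^ k)"
  using distributed_integrable[OF D, of "\<lambda>x. (x - \<mu>) ^ k"] integrable_normal_moment[OF s, of \<mu> k]
  by simp


theorem theorem1:
  fixes M :: "'a measure" and Y1 Y0 :: "'a \<Rightarrow> real"
    and \<rho> mu1hat mu0hat l0 u0 l1 u1 :: real
  assumes "prob_space M"
    and "jointly_gaussian M Y1 Y0"
    and "\<rho> = correlation_of M Y0 Y1"
    and "mu1hat = (LINT \<omega>|M. Y1 \<omega>)"
    and "mu0hat = (LINT \<omega>|M. Y0 \<omega>)"
    and "l0 \<ge> 0" "u0 \<ge> 0" "l1 \<ge> 0" "u1 \<ge> 0"
    and "measure M {\<omega> \<in> space M. Y1 \<omega> \<le> mu1hat + u1} = 0.95"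
    and "measure M {\<omega> \<in> space M. Y1 \<omega> \<ge> mu1hat - l1} = 0.95"
    and "measure M {\<omega> \<in> space M. Y0 \<omega> \<le> mu0hat + u0} = 0.95"
    and "measure M {\<omega> \<in> space M. Y0 \<omega> \<ge> mu0hat - l0} = 0.95"
    and "variance_of M (\<lambda>\<omega>. Y1 \<omega> - Y0 \<omega>) > 0"
  shows "measure M {\<omega> \<in> space M. Y1 \<omega> - Y0 \<omega> \<in> C_ITE \<rho> mu1hat mu0hat l0 u0 l1 u1} = 0.9
     \<and> (\<forall>B \<in> sets borel.
          measure M {\<omega> \<in> space M. Y1 \<omega> - Y0 \<omega> \<in> B} = 0.9 \<longrightarrow>
            emeasure lborel (C_ITE \<rho> mu1hat mu0hat l0 u0 l1 u1) \<le> emeasure lborel B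
          \<and> (emeasure lborel B = emeasure lborel (C_ITE \<rho> mu1hat mu0hat l0 u0 l1 u1) \<longrightarrow>
               emeasure lborel ((B - C_ITE \<rho> mu1hat mu0hat l0 u0 l1 u1)
                                \<union> (C_ITE \<rho> mu1hat mu0hat l0 u0 l1 u1 - B)) = 0))"
proof -
  note a = assms
  interpret prob_space M by (rule a(1))
  have G: "gaussian_rv M (\<lambda>\<omega>. a * Y1 \<omega> + b * Y0 \<omega>)" for a b
    using a(2) unfolding jointly_gaussian_def by blast
  have G1: "gaussian_rv M Y1" using G[of 1 0] by simp
  have G0: "gaussian_rv M Y0" using G[of 0 1] by simp
  have GD: "gaussian_rv M (\<lambda>\<omega>. Y1 \<omega> - Y0 \<omega>)" using G[of 1 "-1"] by simp
  have s1: "{\<omega> \<in> space M. Y1 \<omega> \<le> mu1hat + u1} = {\<omega> \<in> space M. Y1 \<omega> \<in> {..mu1hat + u1}}" by auto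
  have "measure M {\<omega> \<in> space M. Y1 \<omega> \<in> {..mu1hat + u1}} = 0.95" using a(10) by simp
  moreover have "{..mu1hat + u1} \<in> sets (borel :: real measure)" by simp
  ultimately have "\<exists>\<mu> \<sigma>. \<sigma> > 0 \<and> distributed M lborel Y1 (normal_density \<mu> \<sigma>)"
    using nondeg[OF a(1) G1] by blast
  then obtain m1 \<sigma>1 where p1: "\<sigma>1 > 0" and D1: "distributed M lborel Y1 (normal_density m1 \<sigma>1)"
    by blast
  have s0: "{\<omega> \<in> space M. Y0 \<omega> \<le> mu0hat + u0} = {\<omega> \<in> space M. Y0 \<omega> \<in> {..mu0hat + u0}}" by auto
  have "measure M {\<omega> \<in> space M. Y0 \<omega> \<in> {..mu0hat + u0}} = 0.95" using a(12) by simp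
  moreover have "{..mu0hat + u0} \<in> sets (borel :: real measure)" by simp
  ultimately have "\<exists>\<mu> \<sigma>. \<sigma> > 0 \<and> distributed M lborel Y0 (normal_density \<mu> \<sigma>)"
    using nondeg[OF a(1) G0] by blast
  then obtain m0 \<sigma>0 where p0: "\<sigma>0 > 0" and D0: "distributed M lborel Y0 (normal_density m0 \<sigma>0)"
    by blast
  obtain \<tau> \<sigma>d where pd: "\<sigma>d > 0" and DD: "distributed M lborel (\<lambda>\<omega>. Y1 \<omega> - Y0 \<omega>) (normal_density \<tau> \<sigma>d)"
    using nondeg_var[OF a(1) GD a(14)] by blast
  have m1: "m1 = mu1hat" using normal_distributed_expectation[OF p1 D1] a(4) by simp
  have m0: "m0 = mu0hat" using normal_distributed_expectation[OF p0 D0] a(5) by simp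
  have int1: "integrable M Y1"
  proof -
    have "integrable M (\<lambda>\<omega>. (Y1 \<omega> - m1) + m1)"
      using normal_integrable[OF p1 D1, of 1] by (intro Bochner_Integration.integrable_add) auto
    then show ?thesis by simp
  qed
  have int0: "integrable M Y0"
  proof -
    have "integrable M (\<lambda>\<omega>. (Y0 \<omega> - m0) + m0)"
      using normal_integrable[OF p0 D0, of 1] by (intro Bochner_Integration.integrable_add) auto
    then show ?thesis by simp
  qed
  have Ed: "(LINT \<omega>|M. Y1 \<omega> - Y0 \<omega>) = m1 - m0"
    using int1 int0 normal_distributed_expectation[OF p1 D1] normal_distributed_expectation[OF p0 D0]
    by simp
  have tau: "\<tau> = m1 - m0" using normal_distributed_expectation[OF pd DD] Ed by simp
  define z where "z = u1 / \<sigma>1"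
  have z0: "z \<ge> 0" unfolding z_def using a(9) p1 by simp
  have Pz: "Phi z = 0.95"
    using std_both(1)[OF a(1) p1 D1, of z] a(10) p1 m1 unfolding z_def by simp
  have "Phi (l1 / \<sigma>1) = 0.95"
    using std_both(2)[OF a(1) p1 D1, of "l1 / \<sigma>1"] a(11) p1 m1 by simp
  then have l1: "l1 = z * \<sigma>1" using Phi_inj[of "l1 / \<sigma>1" z] Pz p1 by (simp add: field_simps)
  have u1: "u1 = z * \<sigma>1" unfolding z_def using p1 by simp
  have "Phi (u0 / \<sigma>0) = 0.95"
    using std_both(1)[OF a(1) p0 D0, of "u0 / \<sigma>0"] a(12) p0 m0 by simp
  then have u0: "u0 = z * \<sigma>0" using Phi_inj[of "u0 / \<sigma>0" z] Pz p0 by (simp add: field_simps)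
  have "Phi (l0 / \<sigma>0) = 0.95"
    using std_both(2)[OF a(1) p0 D0, of "l0 / \<sigma>0"] a(13) p0 m0 by simp
  then have l0: "l0 = z * \<sigma>0" using Phi_inj[of "l0 / \<sigma>0" z] Pz p0 by (simp add: field_simps)
  have v1: "variance_of M Y1 = \<sigma>1\<^sup>2"
    unfolding variance_of_def using normal_distributed_variance[OF p1 D1] by simp
  have v0: "variance_of M Y0 = \<sigma>0\<^sup>2"
    unfolding variance_of_def using normal_distributed_variance[OF p0 D0] by simp
  have vd: "variance_of M (\<lambda>\<omega>. Y1 \<omega> - Y0 \<omega>) = \<sigma>d\<^sup>2"
    unfolding variance_of_def using normal_distributed_variance[OF pd DD] by simp
  define A where "A = (\<lambda>\<omega>. Y0 \<omega> - m0)"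
  define Bf where "Bf = (\<lambda>\<omega>. Y1 \<omega> - m1)"
  have iA: "integrable M (\<lambda>\<omega>. (A \<omega>)\<^sup>2)" unfolding A_def using normal_integrable[OF p0 D0, of 2] .
  have iB: "integrable M (\<lambda>\<omega>. (Bf \<omega>)\<^sup>2)" unfolding Bf_def using normal_integrable[OF p1 D1, of 2] .
  have iD: "integrable M (\<lambda>\<omega>. (Bf \<omega> - A \<omega>)\<^sup>2)"
  proof -
    have "integrable M (\<lambda>\<omega>. (Y1 \<omega> - Y0 \<omega> - \<tau>)^2)" using normal_integrable[OF pd DD, of 2] .
    moreover have "(\<lambda>\<omega>. (Y1 \<omega> - Y0 \<omega> - \<tau>)^2) = (\<lambda>\<omega>. (Bf \<omega> - A \<omega>)\<^sup>2)"
      unfolding A_def Bf_def tau by (auto simp: algebra_simps)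
    ultimately show ?thesis by simp
  qed
  have eAB: "(\<lambda>\<omega>. A \<omega> * Bf \<omega>) = (\<lambda>\<omega>. ((A \<omega>)\<^sup>2 + (Bf \<omega>)\<^sup>2 - (Bf \<omega> - A \<omega>)\<^sup>2) / 2)"
    by (auto simp: power2_eq_square algebra_simps)
  have iAB: "integrable M (\<lambda>\<omega>. A \<omega> * Bf \<omega>)"
    unfolding eAB using iA iB iD by auto
  have cov: "covariance_of M Y0 Y1 = (LINT \<omega>|M. A \<omega> * Bf \<omega>)"
    unfolding covariance_of_def A_def Bf_def
    using normal_distributed_expectation[OF p1 D1] normal_distributed_expectation[OF p0 D0] by simp
  have rho: "\<rho> * \<sigma>0 * \<sigma>1 = (LINT \<omega>|M. A \<omega> * Bf \<omega>)"
    using a(3) p0 p1 v0 v1 cov unfolding correlation_of_def by simp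
  have sd2: "\<sigma>d\<^sup>2 = \<sigma>1\<^sup>2 + \<sigma>0\<^sup>2 - 2 * \<rho> * \<sigma>0 * \<sigma>1"
  proof -
    have "\<sigma>d\<^sup>2 = (LINT \<omega>|M. (Bf \<omega> - A \<omega>)\<^sup>2)"
      unfolding vd[symmetric] variance_of_def Ed A_def Bf_def by (simp add: algebra_simps)
    also have "\<dots> = (LINT \<omega>|M. (Bf \<omega>)\<^sup>2 + (A \<omega>)\<^sup>2 - 2 * (A \<omega> * Bf \<omega>))"
      by (rule Bochner_Integration.integral_cong) (auto simp: power2_eq_square algebra_simps)
    also have "\<dots> = (LINT \<omega>|M. (Bf \<omega>)\<^sup>2) + (LINT \<omega>|M. (A \<omega>)\<^sup>2) - 2 * (LINT \<omega>|M. A \<omega> * Bf \<omega>)"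
      using iA iB iAB by simp
    also have "(LINT \<omega>|M. (Bf \<omega>)\<^sup>2) = \<sigma>1\<^sup>2"
      using v1 unfolding variance_of_def Bf_def a(4) m1 by simp
    also have "(LINT \<omega>|M. (A \<omega>)\<^sup>2) = \<sigma>0\<^sup>2"
      using v0 unfolding variance_of_def A_def a(5) m0 by simp
    finally show ?thesis using rho by simp
  qed
  have Dr1: "D_rho \<rho> l1 u0 = z * \<sigma>d"
  proof -
    have "l1\<^sup>2 + u0\<^sup>2 - 2 * \<rho> * l1 * u0 = (z * \<sigma>d)\<^sup>2"
      unfolding l1 u0 power_mult_distrib sd2 by (simp add: algebra_simps power2_eq_square)
    then show ?thesis unfolding D_rho_def using z0 pd by simp
  qed
  have Dr2: "D_rho \<rho> l0 u1 = z * \<sigma>d"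
  proof -
    have "l0\<^sup>2 + u1\<^sup>2 - 2 * \<rho> * l0 * u1 = (z * \<sigma>d)\<^sup>2"
      unfolding l0 u1 power_mult_distrib sd2 by (simp add: algebra_simps power2_eq_square)
    then show ?thesis unfolding D_rho_def using z0 pd by simp
  qed
  have Ceq: "C_ITE \<rho> mu1hat mu0hat l0 u0 l1 u1 = {\<tau> - z * \<sigma>d .. \<tau> + z * \<sigma>d}"
    unfolding C_ITE_def Dr1 Dr2 tau m1 m0 by simp
  define S1 where "S1 = {\<omega> \<in> space M. Y1 \<omega> - Y0 \<omega> \<le> \<tau> + \<sigma>d * z}"
  define S2 where "S2 = {\<omega> \<in> space M. Y1 \<omega> - Y0 \<omega> \<ge> \<tau> - \<sigma>d * z}"
  have PS1: "prob S1 = 0.95" unfolding S1_def using std_both(1)[OF a(1) pd DD, of z] Pz by simp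
  have PS2: "prob S2 = 0.95" unfolding S2_def using std_both(2)[OF a(1) pd DD, of z] Pz by simp
  have Ym: "(\<lambda>\<omega>. Y1 \<omega> - Y0 \<omega>) \<in> borel_measurable M"
    using distributed_measurable[OF DD] by simp
  have S1m: "S1 \<in> events" unfolding S1_def using Ym by measurable
  have S2m: "S2 \<in> events" unfolding S2_def using Ym by measurable
  have Un: "S1 \<union> S2 = space M" unfolding S1_def S2_def using z0 pd
    by (auto, smt (verit) mult_nonneg_nonneg)
  have cover: "measure M {\<omega> \<in> space M. Y1 \<omega> - Y0 \<omega> \<in> {\<tau> - z * \<sigma>d .. \<tau> + z * \<sigma>d}} = 0.9"
  proof -
    have "{\<omega> \<in> space M. Y1 \<omega> - Y0 \<omega> \<in> {\<tau> - z * \<sigma>d .. \<tau> + z * \<sigma>d}} = S1 \<inter> S2"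
      unfolding S1_def S2_def by (auto simp: mult.commute)
    moreover have "prob (S1 \<union> S2) = prob S1 + prob S2 - prob (S1 \<inter> S2)"
      by (rule measure_Un3) (use S1m S2m fmeasurable_eq_sets in auto)
    ultimately show ?thesis using Un PS1 PS2 prob_space by simp
  qed
  show ?thesis
  proof (intro conjI ballI impI)
    show "measure M {\<omega> \<in> space M. Y1 \<omega> - Y0 \<omega> \<in> C_ITE \<rho> mu1hat mu0hat l0 u0 l1 u1} = 0.9"
      unfolding Ceq by (rule cover)
  next
    fix B :: "real set"
    assume B: "B \<in> sets borel" and PB: "measure M {\<omega> \<in> space M. Y1 \<omega> - Y0 \<omega> \<in> B} = 0.9"
    have eq: "measure (density lborel (normal_density \<tau> \<sigma>d)) B
        = measure (density lborel (normal_density \<tau> \<sigma>d)) {\<tau> - z * \<sigma>d .. \<tau> + z * \<sigma>d}"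
      using meas_dist[OF DD B] meas_dist[OF DD, of "{\<tau> - z * \<sigma>d .. \<tau> + z * \<sigma>d}"] PB cover by simp
    note O = opt_lemma[OF pd z0 B eq]
    show "emeasure lborel (C_ITE \<rho> mu1hat mu0hat l0 u0 l1 u1) \<le> emeasure lborel B"
      unfolding Ceq using O by simp
    assume "emeasure lborel B = emeasure lborel (C_ITE \<rho> mu1hat mu0hat l0 u0 l1 u1)"
    then show "emeasure lborel ((B - C_ITE \<rho> mu1hat mu0hat l0 u0 l1 u1) \<union> (C_ITE \<rho> mu1hat mu0hat l0 u0 l1 u1 - B)) = 0"
      unfolding Ceq using O by simp
  qed
qed

end
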